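(* For every non-negative integer $k$ and every proper $4$-coloring $\varphi$ of $G_k$, we have $\varphi(v_{(k,1)})=\varphi(v_{(0,1)})$ and $\varphi(v_{(k,2)})=\varphi(v_{(0,2)})$.
   Context: The planar graphs $G_k$ are defined inductively. $G_0$ has vertex set $\{v_{(0,1)},v_{(0,2)}\}$ and the single edge $\{v_{(0,1)},v_{(0,2)}\}$. For $i\ge 1$, $G_i$ is obtained from $G_{i-1}$ by adding, for each $j\in\{1,2\}$, four new vertices $a_{(i,j)},b_{(i,j)},c_{(i,j)},v_{(i,j)}$ and the edges $\{a_{(i,j)},b_{(i,j)}\},\{b_{(i,j)},c_{(i,j)}\},\{c_{(i,j)},a_{(i,j)}\}$, $\{a_{(i,j)},v_{(i,j)}\},\{b_{(i,j)},v_{(i,j)}\},\{c_{(i,j)},v_{(i,j)}\}$, $\{a_{(i,j)},v_{(i-1,j)}\},\{b_{(i,j)},v_{(i-1,j)}\},\{c_{(i,j)},v_{(i-1,j)}\}$. A proper $4$-coloring is a map $V(G_k)\to\{1,2,3,4\}$ giving adjacent vertices different colors. *)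

theory Defs
  imports Main
begin

text \<open>Vertices of the graphs G_k: A i j, B i j, C i j stand for a_(i,j), b_(i,j), c_(i,j)
  and V i j for v_(i,j).  Index j ranges over {1,2}.\<close>
datatype vert = A nat nat | B nat nat | C nat nat | V nat nat

fun verts :: "nat \<Rightarrow> vert set" where
  "verts 0 = {V 0 1, V 0 2}"
| "verts (Suc i) = verts i \<union>
     (\<Union>j\<in>{1,2}. {A (Suc i) j, B (Suc i) j, C (Suc i) j, V (Suc i) j})"

fun edges :: "nat \<Rightarrow> vert set set" where
  "edges 0 = {{V 0 1, V 0 2}}"
| "edges (Suc i) = edges i \<union>
     (\<Union>j\<in>{1,2}.
       {{A (Suc i) j, B (Suc i) j}, {B (Suc i) j, C (Suc i) j}, {C (Suc i) j, A (Suc i) j},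
        {A (Suc i) j, V (Suc i) j}, {B (Suc i) j, V (Suc i) j}, {C (Suc i) j, V (Suc i) j},
        {A (Suc i) j, V i j}, {B (Suc i) j, V i j}, {C (Suc i) j, V i j}})"

text \<open>A proper 4-coloring of G_k: a map V(G_k) \<rightarrow> {1,2,3,4} (values outside V(G_k) irrelevant)
  with adjacent vertices receiving different colors.\<close>
definition proper_4_coloring :: "nat \<Rightarrow> (vert \<Rightarrow> nat) \<Rightarrow> bool" where
  "proper_4_coloring k \<phi> \<longleftrightarrow>
     (\<forall>x\<in>verts k. \<phi> x \<in> {1,2,3,4}) \<and>
     (\<forall>x y. {x, y} \<in> edges k \<longrightarrow> \<phi> x \<noteq> \<phi> y)"

end

theory Submission
  imports Defs
begin

lemma edges_Suc: "edges k \<subseteq> edges (Suc k)"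
  by (simp only: edges.simps) (rule Un_upper1)

lemma edges_mono: "i \<le> k \<Longrightarrow> edges i \<subseteq> edges k"
  by (induction rule: dec_induct) (use edges_Suc in blast)+

lemma verts_Suc: "verts k \<subseteq> verts (Suc k)"
  by (simp only: verts.simps) (rule Un_upper1)

lemma verts_mono: "i \<le> k \<Longrightarrow> verts i \<subseteq> verts k"
  by (induction rule: dec_induct) (use verts_Suc in blast)+

lemma V_in: "j \<in> {1,2} \<Longrightarrow> V i j \<in> verts i"
  by (cases i) auto

lemma four:
  fixes a b c v w :: nat
  assumes "a \<in> {1,2,3,4}" "b \<in> {1,2,3,4}" "c \<in> {1,2,3,4}" "v \<in> {1,2,3,4}" "w \<in> {1,2,3,4}"
    "a \<noteq> b" "b \<noteq> c" "c \<noteq> a" "a \<noteq> v" "b \<noteq> v" "c \<noteq> v" "a \<noteq> w" "b \<noteq> w" "c \<noteq> w"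
  shows "v = w"
  using assms by auto

lemma step:
  assumes "proper_4_coloring k \<phi>" "Suc i \<le> k" "j \<in> {1,2}"
  shows "\<phi> (V (Suc i) j) = \<phi> (V i j)"
proof -
  have E: "edges (Suc i) \<subseteq> edges k" using assms(2) edges_mono by blast
  have Vs: "verts (Suc i) \<subseteq> verts k" using assms(2) verts_mono by blast
  have ne: "\<And>x y. {x,y} \<in> edges (Suc i) \<Longrightarrow> \<phi> x \<noteq> \<phi> y"
    using assms(1) E unfolding proper_4_coloring_def by blast
  have col: "\<And>x. x \<in> verts (Suc i) \<Longrightarrow> \<phi> x \<in> {1,2,3,4}"
    using assms(1) Vs unfolding proper_4_coloring_def by blast
  have vi: "V i j \<in> verts (Suc i)" using V_in[OF assms(3), of i] by simp
  have in4: "\<phi> (A (Suc i) j) \<in> {1,2,3,4}" "\<phi> (B (Suc i) j) \<in> {1,2,3,4}"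
    "\<phi> (C (Suc i) j) \<in> {1,2,3,4}" "\<phi> (V (Suc i) j) \<in> {1,2,3,4}"
    "\<phi> (V i j) \<in> {1,2,3,4}"
    using col assms(3) vi by auto
  have d: "\<phi> (A (Suc i) j) \<noteq> \<phi> (B (Suc i) j)" "\<phi> (B (Suc i) j) \<noteq> \<phi> (C (Suc i) j)"
    "\<phi> (C (Suc i) j) \<noteq> \<phi> (A (Suc i) j)" "\<phi> (A (Suc i) j) \<noteq> \<phi> (V (Suc i) j)"
    "\<phi> (B (Suc i) j) \<noteq> \<phi> (V (Suc i) j)" "\<phi> (C (Suc i) j) \<noteq> \<phi> (V (Suc i) j)"
    "\<phi> (A (Suc i) j) \<noteq> \<phi> (V i j)" "\<phi> (B (Suc i) j) \<noteq> \<phi> (V i j)"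
    "\<phi> (C (Suc i) j) \<noteq> \<phi> (V i j)"
    using assms(3) by (auto intro!: ne)
  show ?thesis by (rule four[OF in4 d])
qed

lemma gen:
  assumes "proper_4_coloring k \<phi>" "i \<le> k" "j \<in> {1,2}"
  shows "\<phi> (V i j) = \<phi> (V 0 j)"
  using assms(2)
proof (induction i)
  case 0 then show ?case by simp
next
  case (Suc i)
  have "\<phi> (V (Suc i) j) = \<phi> (V i j)" by (rule step[OF assms(1) Suc.prems assms(3)])
  moreover have "\<phi> (V i j) = \<phi> (V 0 j)" using Suc.IH Suc.prems by simp
  ultimately show ?case by simp
qed

theorem lemma6p1:
  fixes k :: nat and \<phi> :: "vert \<Rightarrow> nat"
  assumes "proper_4_coloring k \<phi>"
  shows "\<phi> (V k 1) = \<phi> (V 0 1) \<and> \<phi> (V k 2) = \<phi> (V 0 2)"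
  using gen[OF assms order_refl, of 1] gen[OF assms order_refl, of 2] by blast

end
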